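(* Let $\mathscr H$ be a reproducing kernel Hilbert space of complex-valued holomorphic functions on $\mathbb D^2$ such that multiplication by $z_1$ and by $z_2$ define bounded operators $\mathscr M_{z_1},\mathscr M_{z_2}$ on $\mathscr H$. If $\mathscr H$ has the division property, then for every $\lambda=(\lambda_1,\lambda_2)\in\mathbb D^2$ the Koszul complex of $\mathscr M_z-\lambda=(\mathscr M_{z_1}-\lambda_1,\mathscr M_{z_2}-\lambda_2)$ is exact at the middle stage; that is, whenever $g,h\in\mathscr H$ satisfy $(\mathscr M_{z_1}-\lambda_1)g+(\mathscr M_{z_2}-\lambda_2)h=0$, there exists $k\in\mathscr H$ with $g=(\mathscr M_{z_2}-\lambda_2)k$ and $h=-(\mathscr M_{z_1}-\lambda_1)k$.
   Context: $\mathbb D$ is the open unit disc. A Hilbert space $\mathscr H$ of holomorphic functions on $\mathbb D^2$ has the division property if for each $j\in\{1,2\}$, whenever $\lambda\in\mathbb D^2$ and $f\in\mathscr H$ vanishes on $\{z\in\mathbb D^2:z_j=\lambda_j\}$, the holomorphic function $f(z)/(z_j-\lambda_j)$ belongs to $\mathscr H$. For a commuting pair $T=(T_1,T_2)$ on $\mathscr H$, the Koszul complex is $0\to\mathscr H\xrightarrow{B_2}\mathscr H\oplus\mathscr H\xrightarrow{B_1}\mathscr H\to0$ with $B_2h=(T_2h,-T_1h)$ and $B_1(h_1,h_2)=T_1h_1+T_2h_2$; exactness at the middle stage means $\ker B_1=\operatorname{ran}B_2$. *)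

theory Defs
  imports "HOL-Analysis.Analysis"
begin

definition bidisc :: "(complex \<times> complex) set" where
  "bidisc = ball 0 1 \<times> ball 0 1"

definition holo_bidisc :: "(complex \<times> complex \<Rightarrow> complex) \<Rightarrow> bool" where
  "holo_bidisc f \<longleftrightarrow>
     (\<forall>z\<in>bidisc. \<exists>a b. (f has_derivative (\<lambda>w. a * fst w + b * snd w)) (at z))"

definition coord :: "nat \<Rightarrow> complex \<times> complex \<Rightarrow> complex" where
  "coord j z = (if j = 1 then fst z else snd z)"

definition Mz :: "nat \<Rightarrow> (complex \<times> complex \<Rightarrow> complex) \<Rightarrow> (complex \<times> complex \<Rightarrow> complex)" where
  "Mz j f = (\<lambda>z. coord j z * f z)"

definition hnorm :: "('f \<Rightarrow> 'f \<Rightarrow> complex) \<Rightarrow> 'f \<Rightarrow> real" where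
  "hnorm ip f = sqrt (Re (ip f f))"

definition hilbert_fun_space ::
  "(complex \<times> complex \<Rightarrow> complex) set \<Rightarrow>
   ((complex \<times> complex \<Rightarrow> complex) \<Rightarrow> (complex \<times> complex \<Rightarrow> complex) \<Rightarrow> complex) \<Rightarrow> bool" where
  "hilbert_fun_space H ip \<longleftrightarrow>
     (\<lambda>z. 0) \<in> H \<and>
     (\<forall>f\<in>H. \<forall>g\<in>H. (\<lambda>z. f z + g z) \<in> H) \<and>
     (\<forall>c. \<forall>f\<in>H. (\<lambda>z. c * f z) \<in> H) \<and>
     (\<forall>f\<in>H. \<forall>g\<in>H. \<forall>h\<in>H. ip (\<lambda>z. f z + g z) h = ip f h + ip g h) \<and>
     (\<forall>c. \<forall>f\<in>H. \<forall>g\<in>H. ip (\<lambda>z. c * f z) g = c * ip f g) \<and>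
     (\<forall>f\<in>H. \<forall>g\<in>H. ip g f = cnj (ip f g)) \<and>
     (\<forall>f\<in>H. Im (ip f f) = 0 \<and> Re (ip f f) \<ge> 0) \<and>
     (\<forall>f\<in>H. ip f f = 0 \<longrightarrow> f = (\<lambda>z. 0)) \<and>
     (\<forall>u :: nat \<Rightarrow> (complex \<times> complex \<Rightarrow> complex).
        (\<forall>n. u n \<in> H) \<and>
        (\<forall>e>0. \<exists>N. \<forall>m\<ge>N. \<forall>n\<ge>N. hnorm ip (\<lambda>z. u m z - u n z) < e) \<longrightarrow>
        (\<exists>f\<in>H. (\<lambda>n. hnorm ip (\<lambda>z. u n z - f z)) \<longlonglongrightarrow> 0))"

text \<open>Elements are represented by functions on complex x complex vanishing outside
  the bidisc; point evaluations at points of the bidisc are bounded.\<close>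
definition rkhs_bidisc ::
  "(complex \<times> complex \<Rightarrow> complex) set \<Rightarrow>
   ((complex \<times> complex \<Rightarrow> complex) \<Rightarrow> (complex \<times> complex \<Rightarrow> complex) \<Rightarrow> complex) \<Rightarrow> bool" where
  "rkhs_bidisc H ip \<longleftrightarrow>
     hilbert_fun_space H ip \<and>
     (\<forall>f\<in>H. holo_bidisc f \<and> (\<forall>z. z \<notin> bidisc \<longrightarrow> f z = 0)) \<and>
     (\<forall>z\<in>bidisc. \<exists>C. \<forall>f\<in>H. cmod (f z) \<le> C * hnorm ip f)"

definition bounded_Mz ::
  "(complex \<times> complex \<Rightarrow> complex) set \<Rightarrow>
   ((complex \<times> complex \<Rightarrow> complex) \<Rightarrow> (complex \<times> complex \<Rightarrow> complex) \<Rightarrow> complex) \<Rightarrow> nat \<Rightarrow> bool" where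
  "bounded_Mz H ip j \<longleftrightarrow>
     (\<forall>f\<in>H. Mz j f \<in> H) \<and> (\<exists>C. \<forall>f\<in>H. hnorm ip (Mz j f) \<le> C * hnorm ip f)"

definition division_property :: "(complex \<times> complex \<Rightarrow> complex) set \<Rightarrow> bool" where
  "division_property H \<longleftrightarrow>
     (\<forall>j\<in>{1,2::nat}. \<forall>l\<in>bidisc. \<forall>f\<in>H.
        (\<forall>z\<in>bidisc. coord j z = coord j l \<longrightarrow> f z = 0) \<longrightarrow>
        (\<exists>g\<in>H. \<forall>z\<in>bidisc. f z = (coord j z - coord j l) * g z))"

end

theory Submission
  imports Defs
begin

lemma open_bidisc: "open bidisc"
  unfolding bidisc_def by (intro open_Times) auto

lemma holo_cont: "holo_bidisc f \<Longrightarrow> z \<in> bidisc \<Longrightarrow> isCont f z"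
  unfolding holo_bidisc_def using has_derivative_continuous by blast

lemma limit_eq:
  fixes f F :: "complex \<times> complex \<Rightarrow> complex" and p :: "complex \<Rightarrow> complex \<times> complex"
  assumes "isCont f (p 0)" "isCont F (p 0)" "continuous_on UNIV p"
    and "\<And>t. t \<noteq> 0 \<Longrightarrow> p t \<in> bidisc \<Longrightarrow> f (p t) = F (p t)" "p 0 \<in> bidisc"
  shows "f (p 0) = F (p 0)"
proof -
  have pt: "(p \<longlongrightarrow> p 0) (at 0)"
    using assms(3) by (metis UNIV_I continuous_on_def tendsto_within_open open_UNIV)
  have ev1: "eventually (\<lambda>t. p t \<in> bidisc) (at (0::complex))"
    using topological_tendstoD[OF pt open_bidisc assms(5)] .
  have ev2: "eventually (\<lambda>t. t \<noteq> (0::complex)) (at 0)"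
    by (simp add: eventually_at_filter)
  have ev: "eventually (\<lambda>t. f (p t) = F (p t)) (at 0)"
    using eventually_conj[OF ev1 ev2] by (rule eventually_mono) (use assms(4) in auto)
  have t1: "((\<lambda>t. f (p t)) \<longlongrightarrow> f (p 0)) (at 0)"
    using isCont_tendsto_compose[OF assms(1) pt] .
  have t2: "((\<lambda>t. F (p t)) \<longlongrightarrow> F (p 0)) (at 0)"
    using isCont_tendsto_compose[OF assms(2) pt] .
  have t3: "((\<lambda>t. F (p t)) \<longlongrightarrow> f (p 0)) (at 0)"
    using t1 ev by (rule Lim_transform_eventually)
  show ?thesis using tendsto_unique[OF _ t3 t2] by simp
qed

theorem lemma4p3:
  fixes H :: "(complex \<times> complex \<Rightarrow> complex) set"
    and ip :: "(complex \<times> complex \<Rightarrow> complex) \<Rightarrow> (complex \<times> complex \<Rightarrow> complex) \<Rightarrow> complex"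
  assumes "rkhs_bidisc H ip"
    and "bounded_Mz H ip 1" and "bounded_Mz H ip 2"
    and "division_property H"
    and "l \<in> bidisc"
    and "g \<in> H" and "h \<in> H"
    and "(\<lambda>z. (Mz 1 g z - fst l * g z) + (Mz 2 h z - snd l * h z)) = (\<lambda>z. 0)"
  shows "\<exists>k\<in>H. g = (\<lambda>z. Mz 2 k z - snd l * k z) \<and> h = (\<lambda>z. - (Mz 1 k z - fst l * k z))"
proof -
  have HH: "\<And>f. f \<in> H \<Longrightarrow> holo_bidisc f \<and> (\<forall>z. z \<notin> bidisc \<longrightarrow> f z = 0)"
    using assms(1) unfolding rkhs_bidisc_def by blast
  have eq: "(fst z - fst l) * g z + (snd z - snd l) * h z = 0" for z
    using fun_cong[OF assms(8), of z] by (simp add: Mz_def coord_def algebra_simps)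
  have gz: "g z = 0" if z: "z \<in> bidisc" "snd z = snd l" for z
  proof (cases "fst z = fst l")
    case False thus ?thesis using eq[of z] z by simp
  next
    case True
    define p where "p t = (fst l + t, snd l)" for t
    have "g (p 0) = (\<lambda>_. 0) (p 0)"
    proof (rule limit_eq)
      show "isCont g (p 0)" using HH[OF assms(6)] holo_cont True z
        by (metis p_def add_0_right prod.collapse)
      show "isCont (\<lambda>_. 0) (p 0)" by simp
      show "continuous_on UNIV p" unfolding p_def by (intro continuous_intros)
      show "p 0 \<in> bidisc" using True z by (metis p_def add_0_right prod.collapse)
      fix t :: complex assume "t \<noteq> 0" "p t \<in> bidisc"
      thus "g (p t) = 0" using eq[of "p t"] by (simp add: p_def)
    qed
    thus ?thesis using True z by (metis p_def add_0_right prod.collapse)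
  qed
  have "\<exists>k\<in>H. \<forall>z\<in>bidisc. g z = (coord 2 z - coord 2 l) * k z"
    using assms(4) assms(5) assms(6) gz unfolding division_property_def
    by (auto simp: coord_def)
  then obtain k where kH: "k \<in> H" and k: "\<And>z. z \<in> bidisc \<Longrightarrow> g z = (snd z - snd l) * k z"
    by (auto simp: coord_def)
  have gk: "g z = (snd z - snd l) * k z" for z
  proof (cases "z \<in> bidisc")
    case False then have "k z = 0" "g z = 0" using HH[OF kH] HH[OF assms(6)] by blast+ thus ?thesis by simp
  qed (rule k)
  have hk1: "h z = - ((fst z - fst l) * k z)" if "snd z \<noteq> snd l" for z
  proof -
    have "(snd z - snd l) * ((fst z - fst l) * k z + h z) = 0"
      using eq[of z] gk[of z] by (simp add: algebra_simps)
    hence "(fst z - fst l) * k z + h z = 0" using that by simp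
    thus ?thesis by (simp add: add_eq_0_iff2)
  qed
  have hk: "h z = - ((fst z - fst l) * k z)" for z
  proof (cases "z \<in> bidisc")
    case False then have "k z = 0" "h z = 0" using HH[OF kH] HH[OF assms(7)] by blast+ thus ?thesis by simp
  next
    case zin: True
    show ?thesis
    proof (cases "snd z = snd l")
      case False thus ?thesis by (rule hk1)
    next
      case True
      define p where "p t = (fst z, snd l + t)" for t
      have p0: "p 0 = z" using True by (simp add: p_def prod_eq_iff)
      have "h (p 0) = (\<lambda>w. - ((fst w - fst l) * k w)) (p 0)"
      proof (rule limit_eq)
        show "isCont h (p 0)" using HH[OF assms(7)] holo_cont zin p0 by metis
        show "isCont (\<lambda>w. - ((fst w - fst l) * k w)) (p 0)"
        proof -
          have "isCont k z" using HH[OF kH] holo_cont zin by blast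
          thus ?thesis using p0 by (intro continuous_intros) auto
        qed
        show "continuous_on UNIV p" unfolding p_def by (intro continuous_intros)
        show "p 0 \<in> bidisc" using zin p0 by simp
        fix t :: complex assume "t \<noteq> 0" "p t \<in> bidisc"
        thus "h (p t) = - ((fst (p t) - fst l) * k (p t))" by (intro hk1) (simp add: p_def)
      qed
      thus ?thesis using p0 by simp
    qed
  qed
  show ?thesis
    by (intro bexI[OF _ kH] conjI ext) (simp_all add: gk hk Mz_def coord_def algebra_simps)
qed

end
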